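(* Assume the general coarsening setting described in the context and let $r$ be a deterministic path with $P(R=r)>0$. If CAR(GCMP)-loc holds on $r$, i.e. $$\mathcal{L}^{(\theta,\psi)/(\theta_0,\psi_0)}_{\mathcal{R}|\mathcal{X}}=\mathcal{L}^{(\theta,\psi)/(\theta_0,\psi_0)}_{\mathcal{R}|\mathcal{X}^r}\quad\text{a.s. on }\{R=r\}\ \text{for all }(\theta,\psi),$$ then the mechanism leading to incomplete data is ignorable on $r$: for all $\theta$ and whatever $\psi_0$, $\mathcal{L}^{(\theta,\psi_0)/(\theta_0,\psi_0)}_{\mathcal{O}}=\mathcal{L}^{\theta/\theta_0}_{\mathcal{X}^r}$ a.s. on $\{R=r\}$.
   Context: Setting. On a measurable space $(\Omega,\mathcal{F})$ live two càdlàg stochastic processes: $X=(X_t)_{t\ge0}$ with values in $\mathbb{R}^d$ (path space a Skorohod space) and a response indicator process $R=(R_t)_{t\ge0}$ with values in $\{0,1\}$, $R_t=1$ meaning $X_t$ is observed. Let $\mathcal{X}=\sigma(X_t,t\ge0)$, $\mathcal{R}=\sigma(R_t,t\ge0)$, $\mathcal{F}=\mathcal{X}\vee\mathcal{R}$. A model is a family $\{P_{(\theta,\psi)}:(\theta,\psi)\in\Theta\times\Psi\}$ of mutually equivalent probability measures on $\mathcal{F}$ with reference measure $P_{(\theta_0,\psi_0)}$; the restriction of $P_{(\theta,\psi)}$ to $\mathcal{X}$ depends only on $\theta$ (denoted $P_\theta$). Non-informativeness: $P_{(\theta_1,\psi)}(A\mid\mathcal{X})=P_{(\theta_2,\psi)}(A\mid\mathcal{X})$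 a.s. for all $A\in\mathcal{R}$. For a sub-$\sigma$-field $\mathcal{G}$, $\mathcal{L}^{(\theta,\psi)/(\theta_0,\psi_0)}_{\mathcal{G}}$ is the Radon–Nikodym derivative $dP_{(\theta,\psi)}/dP_{(\theta_0,\psi_0)}$ restricted to $\mathcal{G}$; for $\mathcal{G}\subset\mathcal{X}$ it is written $\mathcal{L}^{\theta/\theta_0}_{\mathcal{G}}$. The conditional likelihood ratio is $\mathcal{L}_{\mathcal{Y}|\mathcal{G}}=\mathcal{L}_{\mathcal{G}\vee\mathcal{Y}}/\mathcal{L}_{\mathcal{G}}$. The observed $\sigma$-field is $\mathcal{O}=\sigma(R_tX_t,R_t,\ t\ge0)$. For a deterministic path $r$, $\{R=r\}=\{R_t=r_t\ \forall t\}$ and $\mathcal{X}^r=\sigma(r_tX_t,\ t\ge0)$. *)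

theory Defs
  imports "HOL-Probability.Probability"
begin

definition cadlag :: "(real \<Rightarrow> 'b::topological_space) \<Rightarrow> bool" where
  "cadlag f \<longleftrightarrow> (\<forall>t\<ge>0. (f \<longlongrightarrow> f t) (at_right t)) \<and>
                 (\<forall>t>0. \<exists>l. (f \<longlongrightarrow> l) (at_left t))"

definition gen_sigma :: "'a set \<Rightarrow> ('i \<Rightarrow> 'a \<Rightarrow> 'b::topological_space) \<Rightarrow> 'i set \<Rightarrow> 'a measure" where
  "gen_sigma \<Omega> f I = sigma \<Omega> {f i -` B \<inter> \<Omega> | i B. i \<in> I \<and> B \<in> sets borel}"

definition join_sigma :: "'a set \<Rightarrow> 'a measure \<Rightarrow> 'a measure \<Rightarrow> 'a measure" where
  "join_sigma \<Omega> G H = sigma \<Omega> (sets G \<union> sets H)"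

definition LR :: "'a measure \<Rightarrow> 'a measure \<Rightarrow> 'a measure \<Rightarrow> 'a \<Rightarrow> real" where
  "LR Q Q0 G = (\<lambda>\<omega>. enn2real (RN_deriv (restr_to_subalg Q0 G) (restr_to_subalg Q G) \<omega>))"

definition condLR :: "'a set \<Rightarrow> 'a measure \<Rightarrow> 'a measure \<Rightarrow> 'a measure \<Rightarrow> 'a measure \<Rightarrow> 'a \<Rightarrow> real" where
  "condLR \<Omega> Q Q0 Y G = (\<lambda>\<omega>. LR Q Q0 (join_sigma \<Omega> G Y) \<omega> / LR Q Q0 G \<omega>)"

definition path_event :: "'a set \<Rightarrow> (real \<Rightarrow> 'a \<Rightarrow> real) \<Rightarrow> (real \<Rightarrow> real) \<Rightarrow> 'a set" where
  "path_event \<Omega> R r = {\<omega> \<in> \<Omega>. \<forall>t\<ge>0. R t \<omega> = r t}"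

end

theory Submission
  imports Defs
begin

lemma restr_dens:
  assumes Q: "prob_space Q" and Q0: "prob_space Q0"
    and sp: "space Q = space Q0" and st: "sets Q = sets Q0"
    and ac: "null_sets Q0 \<subseteq> null_sets Q"
    and sub: "subalgebra Q0 G"
  shows "density (restr_to_subalg Q0 G) (RN_deriv (restr_to_subalg Q0 G) (restr_to_subalg Q G)) = restr_to_subalg Q G"
proof -
  have subQ: "subalgebra Q G" using sub sp st by (simp add: subalgebra_def)
  interpret F: finite_measure "restr_to_subalg Q0 G"
    by (rule finite_measure_restr_to_subalg[OF sub prob_space.axioms(1)[OF Q0]])
  show ?thesis
  proof (rule F.density_RN_deriv)
    show "absolutely_continuous (restr_to_subalg Q0 G) (restr_to_subalg Q G)"
      unfolding absolutely_continuous_def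
      using null_sets_restr_to_subalg[OF sub] null_sets_restr_to_subalg[OF subQ] ac by auto
    show "sets (restr_to_subalg Q G) = sets (restr_to_subalg Q0 G)"
      using sets_restr_to_subalg[OF sub] sets_restr_to_subalg[OF subQ] by simp
  qed
qed

lemma dens_nn:
  assumes Q: "prob_space Q" and Q0: "prob_space Q0"
    and sp: "space Q = space Q0" and st: "sets Q = sets Q0"
    and ac: "null_sets Q0 \<subseteq> null_sets Q"
    and sub: "subalgebra Q0 G"
    and f: "f \<in> borel_measurable G"
  shows "(\<integral>\<^sup>+x. f x \<partial>Q) = (\<integral>\<^sup>+x. RN_deriv (restr_to_subalg Q0 G) (restr_to_subalg Q G) x * f x \<partial>Q0)"
proof -
  have subQ: "subalgebra Q G" using sub sp st by (simp add: subalgebra_def)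
  let ?d = "RN_deriv (restr_to_subalg Q0 G) (restr_to_subalg Q G)"
  have "(\<integral>\<^sup>+x. f x \<partial>Q) = (\<integral>\<^sup>+x. f x \<partial>restr_to_subalg Q G)"
    using nn_integral_subalgebra2[OF subQ f] by simp
  also have "\<dots> = (\<integral>\<^sup>+x. f x \<partial>density (restr_to_subalg Q0 G) ?d)"
    using restr_dens[OF assms(1-6)] by simp
  also have "\<dots> = (\<integral>\<^sup>+x. ?d x * f x \<partial>restr_to_subalg Q0 G)"
    by (rule nn_integral_density) (auto simp: measurable_in_subalg[OF sub] f)
  also have "\<dots> = (\<integral>\<^sup>+x. ?d x * f x \<partial>Q0)"
  proof (rule nn_integral_subalgebra2[OF sub])
    show "(\<lambda>x. ?d x * f x) \<in> borel_measurable G"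
      using f borel_measurable_RN_deriv[of "restr_to_subalg Q0 G" "restr_to_subalg Q G"]
      by (simp add: measurable_cong_sets[OF sets_restr_to_subalg[OF sub] refl])
  qed
  finally show ?thesis .
qed

lemma dens_unique:
  assumes Q: "prob_space Q" and Q0: "prob_space Q0"
    and sp: "space Q = space Q0" and st: "sets Q = sets Q0"
    and sub: "subalgebra Q0 G"
    and g: "g \<in> borel_measurable G"
    and eq: "\<And>A. A \<in> sets G \<Longrightarrow> emeasure Q A = (\<integral>\<^sup>+x. g x * indicator A x \<partial>Q0)"
  shows "AE x in Q0. g x = RN_deriv (restr_to_subalg Q0 G) (restr_to_subalg Q G) x"
proof -
  have subQ: "subalgebra Q G" using sub sp st by (simp add: subalgebra_def)
  interpret F: finite_measure "restr_to_subalg Q0 G"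
    by (rule finite_measure_restr_to_subalg[OF sub prob_space.axioms(1)[OF Q0]])
  have gm: "g \<in> borel_measurable (restr_to_subalg Q0 G)"
    by (simp add: measurable_cong_sets[OF sets_restr_to_subalg[OF sub] refl] g)
  have "density (restr_to_subalg Q0 G) g = restr_to_subalg Q G"
  proof (rule measure_eqI)
    show "sets (density (restr_to_subalg Q0 G) g) = sets (restr_to_subalg Q G)"
      using sets_restr_to_subalg[OF sub] sets_restr_to_subalg[OF subQ] by simp
    fix A assume "A \<in> sets (density (restr_to_subalg Q0 G) g)"
    then have A: "A \<in> sets G" using sets_restr_to_subalg[OF sub] by simp
    have "emeasure (density (restr_to_subalg Q0 G) g) A = (\<integral>\<^sup>+x. g x * indicator A x \<partial>restr_to_subalg Q0 G)"
      by (rule emeasure_density[OF gm]) (simp add: sets_restr_to_subalg[OF sub] A)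
    also have "\<dots> = (\<integral>\<^sup>+x. g x * indicator A x \<partial>Q0)"
      by (rule nn_integral_subalgebra2[OF sub]) (use g A in auto)
    also have "\<dots> = emeasure (restr_to_subalg Q G) A"
      using eq[OF A] emeasure_restr_to_subalg[OF subQ A] by simp
    finally show "emeasure (density (restr_to_subalg Q0 G) g) A = emeasure (restr_to_subalg Q G) A" .
  qed
  then have "AE x in restr_to_subalg Q0 G. g x = RN_deriv (restr_to_subalg Q0 G) (restr_to_subalg Q G) x"
    using F.RN_deriv_unique[OF gm] by simp
  then show ?thesis using AE_restr_to_subalg[OF sub] by blast
qed


lemma dens_meas:
  assumes sub: "subalgebra Q0 G"
  shows "RN_deriv (restr_to_subalg Q0 G) (restr_to_subalg Q G) \<in> borel_measurable G"
  using borel_measurable_RN_deriv[of "restr_to_subalg Q0 G" "restr_to_subalg Q G"]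
  by (simp add: measurable_cong_sets[OF sets_restr_to_subalg[OF sub] refl])

lemma dens_set:
  assumes Q: "prob_space Q" and Q0: "prob_space Q0"
    and sp: "space Q = space Q0" and st: "sets Q = sets Q0"
    and ac: "null_sets Q0 \<subseteq> null_sets Q"
    and sub: "subalgebra Q0 G" and A: "A \<in> sets G"
  shows "emeasure Q A = (\<integral>\<^sup>+x. RN_deriv (restr_to_subalg Q0 G) (restr_to_subalg Q G) x * indicator A x \<partial>Q0)"
proof -
  have AQ: "A \<in> sets Q" using A sub st by (auto simp: subalgebra_def)
  have "emeasure Q A = (\<integral>\<^sup>+x. indicator A x \<partial>Q)" using AQ by simp
  also have "\<dots> = (\<integral>\<^sup>+x. RN_deriv (restr_to_subalg Q0 G) (restr_to_subalg Q G) x * indicator A x \<partial>Q0)"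
    by (rule dens_nn[OF assms(1-6)]) (use A in simp)
  finally show ?thesis .
qed

lemma dens_pos_fin:
  assumes Q: "prob_space Q" and Q0: "prob_space Q0"
    and sp: "space Q = space Q0" and st: "sets Q = sets Q0"
    and eqn: "null_sets Q = null_sets Q0"
    and sub: "subalgebra Q0 G"
  shows "AE x in Q0. 0 < RN_deriv (restr_to_subalg Q0 G) (restr_to_subalg Q G) x \<and>
                     RN_deriv (restr_to_subalg Q0 G) (restr_to_subalg Q G) x < \<infinity>"
proof -
  let ?d = "RN_deriv (restr_to_subalg Q0 G) (restr_to_subalg Q G)"
  have ac: "null_sets Q0 \<subseteq> null_sets Q" using eqn by simp
  have dm: "?d \<in> borel_measurable G" by (rule dens_meas[OF sub])
  define A0 where "A0 = {x\<in>space G. ?d x = 0}"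
  define A1 where "A1 = {x\<in>space G. ?d x = \<infinity>}"
  have A0G: "A0 \<in> sets G" unfolding A0_def using dm by measurable
  have A1G: "A1 \<in> sets G" unfolding A1_def using dm by measurable
  have A0Q0: "A0 \<in> sets Q0" "A1 \<in> sets Q0" using A0G A1G sub by (auto simp: subalgebra_def)
  have "emeasure Q A0 = (\<integral>\<^sup>+x. ?d x * indicator A0 x \<partial>Q0)" by (rule dens_set[OF assms(1-4) ac sub A0G])
  also have "\<dots> = (\<integral>\<^sup>+x. 0 \<partial>Q0)"
    by (rule nn_integral_cong) (auto simp: A0_def indicator_def)
  finally have "A0 \<in> null_sets Q" using A0Q0 st by (auto simp: null_sets_def)
  then have n0: "A0 \<in> null_sets Q0" using eqn by simp
  have "emeasure Q A1 = (\<integral>\<^sup>+x. ?d x * indicator A1 x \<partial>Q0)" by (rule dens_set[OF assms(1-4) ac sub A1G])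
  also have "\<dots> = (\<integral>\<^sup>+x. \<infinity> * indicator A1 x \<partial>Q0)"
    by (rule nn_integral_cong) (auto simp: A1_def indicator_def)
  also have "\<dots> = \<infinity> * emeasure Q0 A1" using A0Q0 by (simp add: nn_integral_cmult_indicator)
  finally have e1: "emeasure Q A1 = \<infinity> * emeasure Q0 A1" .
  have "emeasure Q A1 \<noteq> \<infinity>" using finite_measure.emeasure_finite[OF prob_space.axioms(1)[OF Q]] by simp
  then have "emeasure Q0 A1 = 0" using e1 by (auto simp: ennreal_mult_eq_top_iff)
  then have n1: "A1 \<in> null_sets Q0" using A0Q0 by auto
  show ?thesis
  proof (rule AE_I')
    show "A0 \<union> A1 \<in> null_sets Q0" using n0 n1 by auto
    show "{x \<in> space Q0. \<not> (0 < ?d x \<and> ?d x < \<infinity>)} \<subseteq> A0 \<union> A1"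
      using sub by (auto simp: A0_def A1_def subalgebra_def top.not_eq_extremum)
  qed
qed

lemma dens_chain:
  assumes Q: "prob_space Q" and Q0: "prob_space Q0" and P: "prob_space P"
    and sp: "space Q = space P" "space Q0 = space P" and st: "sets Q = sets P" "sets Q0 = sets P"
    and eqn: "null_sets Q = null_sets P" "null_sets Q0 = null_sets P"
    and sub: "subalgebra P G"
  shows "AE x in P. RN_deriv (restr_to_subalg P G) (restr_to_subalg Q G) x =
     RN_deriv (restr_to_subalg Q0 G) (restr_to_subalg Q G) x * RN_deriv (restr_to_subalg P G) (restr_to_subalg Q0 G) x"
proof -
  let ?a = "RN_deriv (restr_to_subalg Q0 G) (restr_to_subalg Q G)"
  let ?b = "RN_deriv (restr_to_subalg P G) (restr_to_subalg Q0 G)"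
  have sub0: "subalgebra Q0 G" using sub sp st by (simp add: subalgebra_def)
  have am: "?a \<in> borel_measurable G" by (rule dens_meas[OF sub0])
  have bm: "?b \<in> borel_measurable G" by (rule dens_meas[OF sub])
  have "AE x in P. (\<lambda>x. ?a x * ?b x) x = RN_deriv (restr_to_subalg P G) (restr_to_subalg Q G) x"
  proof (rule dens_unique[OF Q P sp(1) st(1) sub])
    show "(\<lambda>x. ?a x * ?b x) \<in> borel_measurable G" using am bm by measurable
    fix A assume A: "A \<in> sets G"
    have "emeasure Q A = (\<integral>\<^sup>+x. ?a x * indicator A x \<partial>Q0)"
      by (rule dens_set[OF Q Q0 _ _ _ sub0 A]) (use sp st eqn in auto)
    also have "\<dots> = (\<integral>\<^sup>+x. ?b x * (?a x * indicator A x) \<partial>P)"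
      by (rule dens_nn[OF Q0 P sp(2) st(2) _ sub]) (use eqn am A in auto)
    also have "\<dots> = (\<integral>\<^sup>+x. ?a x * ?b x * indicator A x \<partial>P)"
      by (simp add: mult_ac)
    finally show "emeasure Q A = (\<integral>\<^sup>+x. ?a x * ?b x * indicator A x \<partial>P)" .
  qed
  then show ?thesis by auto
qed


lemma dens_trace:
  assumes Q: "prob_space Q" and Q0: "prob_space Q0"
    and sp: "space Q = space Q0" and st: "sets Q = sets Q0"
    and ac: "null_sets Q0 \<subseteq> null_sets Q"
    and sub1: "subalgebra Q0 G1" and sub2: "subalgebra Q0 G2"
    and E1: "E \<in> sets G1" and E2: "E \<in> sets G2"
    and tr12: "\<And>A. A \<in> sets G1 \<Longrightarrow> \<exists>B\<in>sets G2. A \<inter> E = B \<inter> E"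
    and tr21: "\<And>B. B \<in> sets G2 \<Longrightarrow> \<exists>A\<in>sets G1. B \<inter> E = A \<inter> E"
  shows "AE x in Q0. x \<in> E \<longrightarrow> RN_deriv (restr_to_subalg Q0 G1) (restr_to_subalg Q G1) x =
                                 RN_deriv (restr_to_subalg Q0 G2) (restr_to_subalg Q G2) x"
proof -
  let ?d1 = "RN_deriv (restr_to_subalg Q0 G1) (restr_to_subalg Q G1)"
  let ?d2 = "RN_deriv (restr_to_subalg Q0 G2) (restr_to_subalg Q G2)"
  define g where "g = (\<lambda>x. if x \<in> E then ?d2 x else ?d1 x)"
  have d1m: "?d1 \<in> borel_measurable G1" by (rule dens_meas[OF sub1])
  have d2m: "?d2 \<in> borel_measurable G2" by (rule dens_meas[OF sub2])
  have spG: "space G1 = space Q0" "space G2 = space Q0" using sub1 sub2 by (auto simp: subalgebra_def)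
  have EO: "E \<subseteq> space Q0" using sets.sets_into_space[OF E1] spG by simp
  have gm: "g \<in> borel_measurable G1"
  proof (rule measurableI)
    fix S :: "ennreal set" assume S: "S \<in> sets borel"
    have eq: "g -` S \<inter> space G1 = ((?d2 -` S \<inter> space G2) \<inter> E) \<union> ((?d1 -` S \<inter> space G1) - E)"
      using EO spG by (auto simp: g_def split: if_splits)
    have "?d2 -` S \<inter> space G2 \<in> sets G2" using d2m S by (rule measurable_sets)
    then obtain A where A: "A \<in> sets G1" "(?d2 -` S \<inter> space G2) \<inter> E = A \<inter> E" using tr21 by blast
    have "?d1 -` S \<inter> space G1 \<in> sets G1" using d1m S by (rule measurable_sets)
    then show "g -` S \<inter> space G1 \<in> sets G1" unfolding eq A(2) using A(1) E1 by auto
  qed auto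
  have "AE x in Q0. g x = ?d1 x"
  proof (rule dens_unique[OF Q Q0 sp st sub1 gm])
    fix A assume A: "A \<in> sets G1"
    obtain B where B: "B \<in> sets G2" "A \<inter> E = B \<inter> E" using tr12[OF A] by blast
    have BE: "B \<inter> E \<in> sets G2" using B E2 by auto
    have AE1: "A - E \<in> sets G1" using A E1 by auto
    have inQ: "A \<inter> E \<in> sets Q" "A - E \<in> sets Q" using A E1 sub1 st by (auto simp: subalgebra_def)
    have "emeasure Q A = emeasure Q (A \<inter> E) + emeasure Q (A - E)"
      using plus_emeasure[OF inQ, symmetric] by (simp add: Int_Diff_Un Int_Diff_disjoint)
    also have "emeasure Q (A \<inter> E) = (\<integral>\<^sup>+x. ?d2 x * indicator (A \<inter> E) x \<partial>Q0)"
      unfolding B(2) by (rule dens_set[OF Q Q0 sp st ac sub2 BE])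
    also have "emeasure Q (A - E) = (\<integral>\<^sup>+x. ?d1 x * indicator (A - E) x \<partial>Q0)"
      by (rule dens_set[OF Q Q0 sp st ac sub1 AE1])
    also have "(\<integral>\<^sup>+x. ?d2 x * indicator (A \<inter> E) x \<partial>Q0) + (\<integral>\<^sup>+x. ?d1 x * indicator (A - E) x \<partial>Q0)
       = (\<integral>\<^sup>+x. ?d2 x * indicator (A \<inter> E) x + ?d1 x * indicator (A - E) x \<partial>Q0)"
    proof (rule nn_integral_add[symmetric])
      show "(\<lambda>x. ?d2 x * indicator (A \<inter> E) x) \<in> borel_measurable Q0"
        using measurable_from_subalg[OF sub2 d2m] inQ st by measurable
      show "(\<lambda>x. ?d1 x * indicator (A - E) x) \<in> borel_measurable Q0"
        using measurable_from_subalg[OF sub1 d1m] inQ st by measurable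
    qed
    also have "\<dots> = (\<integral>\<^sup>+x. g x * indicator A x \<partial>Q0)"
      by (rule nn_integral_cong) (auto simp: g_def indicator_def)
    finally show "emeasure Q A = (\<integral>\<^sup>+x. g x * indicator A x \<partial>Q0)" .
  qed
  then show ?thesis by eventually_elim (auto simp: g_def)
qed


lemma real_change:
  assumes Q: "prob_space Q" and Q0: "prob_space Q0"
    and sp: "space Q = space Q0" and st: "sets Q = sets Q0"
    and ac: "null_sets Q0 \<subseteq> null_sets Q"
    and sub: "subalgebra Q0 G"
    and h: "(h :: 'a \<Rightarrow> real) \<in> borel_measurable G"
  shows "(\<integral>x. h x \<partial>Q) = (\<integral>x. enn2real (RN_deriv (restr_to_subalg Q0 G) (restr_to_subalg Q G) x) * h x \<partial>Q0)"
proof -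
  let ?d = "RN_deriv (restr_to_subalg Q0 G) (restr_to_subalg Q G)"
  have subQ: "subalgebra Q G" using sub sp st by (simp add: subalgebra_def)
  interpret F: finite_measure "restr_to_subalg Q0 G"
    by (rule finite_measure_restr_to_subalg[OF sub prob_space.axioms(1)[OF Q0]])
  have FQ: "finite_measure (restr_to_subalg Q G)"
    by (rule finite_measure_restr_to_subalg[OF subQ prob_space.axioms(1)[OF Q]])
  have acr: "absolutely_continuous (restr_to_subalg Q0 G) (restr_to_subalg Q G)"
      unfolding absolutely_continuous_def
      using null_sets_restr_to_subalg[OF sub] null_sets_restr_to_subalg[OF subQ] ac by auto
  have sr: "sets (restr_to_subalg Q G) = sets (restr_to_subalg Q0 G)"
      using sets_restr_to_subalg[OF sub] sets_restr_to_subalg[OF subQ] by simp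
  have fin: "AE x in restr_to_subalg Q0 G. ?d x \<noteq> \<infinity>"
    by (rule F.RN_deriv_finite[OF finite_measure.axioms(1)[OF FQ] acr sr])
  have hm: "h \<in> borel_measurable (restr_to_subalg Q0 G)"
    by (simp add: measurable_cong_sets[OF sets_restr_to_subalg[OF sub] refl] h)
  have "restr_to_subalg Q G = density (restr_to_subalg Q0 G) ?d"
    by (rule restr_dens[OF assms(1-6), symmetric])
  also have "\<dots> = density (restr_to_subalg Q0 G) (\<lambda>x. ennreal (enn2real (?d x)))"
  proof (rule density_cong)
    show "?d \<in> borel_measurable (restr_to_subalg Q0 G)" by (rule borel_measurable_RN_deriv)
    then show "(\<lambda>x. ennreal (enn2real (?d x))) \<in> borel_measurable (restr_to_subalg Q0 G)" by measurable
    show "AE x in restr_to_subalg Q0 G. ?d x = ennreal (enn2real (?d x))"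
      using fin by eventually_elim (simp add: ennreal_enn2real_if)
  qed
  finally have eqd: "restr_to_subalg Q G = density (restr_to_subalg Q0 G) (\<lambda>x. ennreal (enn2real (?d x)))" .
  have "(\<integral>x. h x \<partial>Q) = (\<integral>x. h x \<partial>restr_to_subalg Q G)"
    using integral_subalgebra2[OF subQ h] by simp
  also have "\<dots> = (\<integral>x. h x \<partial>density (restr_to_subalg Q0 G) (\<lambda>x. ennreal (enn2real (?d x))))"
    using eqd by (rule arg_cong[where f="\<lambda>M. \<integral>x. h x \<partial>M"])
  also have "\<dots> = (\<integral>x. enn2real (?d x) *\<^sub>R h x \<partial>restr_to_subalg Q0 G)"
    by (rule integral_density[OF hm], rule borel_measurable_enn2real, rule borel_measurable_RN_deriv, simp)
  also have "\<dots> = (\<integral>x. enn2real (?d x) *\<^sub>R h x \<partial>Q0)"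
  proof (rule integral_subalgebra2[OF sub])
    show "(\<lambda>x. enn2real (?d x) *\<^sub>R h x) \<in> borel_measurable G"
      using h dens_meas[OF sub, of Q] by measurable
  qed
  also have "\<dots> = (\<integral>x. enn2real (?d x) * h x \<partial>Q0)" by simp
  finally show ?thesis .
qed


lemma sfs: "prob_space M \<Longrightarrow> subalgebra M F \<Longrightarrow> sigma_finite_subalgebra M F"
  by (rule sigma_finite_subalgebra.intro, assumption,
      rule finite_measure.axioms(1), rule finite_measure_restr_to_subalg, assumption, erule prob_space.axioms(1))

lemma AE_transfer:
  assumes "null_sets Q0 \<subseteq> null_sets Q" "space Q = space Q0" "AE x in Q0. P x"
  shows "AE x in Q. P x"
proof -
  from assms(3) obtain N where N: "{x \<in> space Q0. \<not> P x} \<subseteq> N" "emeasure Q0 N = 0" "N \<in> sets Q0"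
    by (rule AE_E)
  then have "N \<in> null_sets Q" using assms(1) by auto
  then show ?thesis by (rule AE_I') (use N assms(2) in auto)
qed

lemma dens_integrable:
  assumes Q: "prob_space Q" and Q0: "prob_space Q0"
    and sp: "space Q = space Q0" and st: "sets Q = sets Q0"
    and ac: "null_sets Q0 \<subseteq> null_sets Q"
    and sub: "subalgebra Q0 G"
  shows "integrable Q0 (\<lambda>x. enn2real (RN_deriv (restr_to_subalg Q0 G) (restr_to_subalg Q G) x))"
proof (rule integrableI_nonneg)
  let ?d = "RN_deriv (restr_to_subalg Q0 G) (restr_to_subalg Q G)"
  show "(\<lambda>x. enn2real (?d x)) \<in> borel_measurable Q0"
    using measurable_from_subalg[OF sub dens_meas[OF sub, of Q]] by measurable
  show "AE x in Q0. 0 \<le> enn2real (?d x)" by simp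
  have "(\<integral>\<^sup>+ x. ennreal (enn2real (?d x)) \<partial>Q0) \<le> (\<integral>\<^sup>+ x. ?d x * indicator (space Q0) x \<partial>Q0)"
    by (rule nn_integral_mono) (auto simp: ennreal_enn2real_if)
  also have "\<dots> = emeasure Q (space Q0)"
    by (rule dens_set[OF assms, symmetric]) (metis sets.top sub subalgebra_def)
  also have "\<dots> < \<infinity>" using finite_measure.emeasure_finite[OF prob_space.axioms(1)[OF Q]] by (simp add: less_top)
  finally show "(\<integral>\<^sup>+ x. ennreal (enn2real (?d x)) \<partial>Q0) < \<infinity>" .
qed

lemma noninf_dens:
  assumes Q: "prob_space Q" and Q0: "prob_space Q0"
    and sp: "space Q = space Q0" and st: "sets Q = sets Q0"
    and eqn: "null_sets Q = null_sets Q0"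
    and subX: "subalgebra Q0 X" and subR: "subalgebra Q0 R"
    and sG: "sets G = sets Q0" "space G = space Q0"
    and gen: "sets Q0 = sigma_sets (space Q0) (sets X \<union> sets R)"
    and ni: "\<And>A. A \<in> sets R \<Longrightarrow> AE x in Q0. real_cond_exp Q X (indicator A) x = real_cond_exp Q0 X (indicator A) x"
  shows "AE x in Q0. RN_deriv (restr_to_subalg Q0 X) (restr_to_subalg Q X) x =
                     RN_deriv (restr_to_subalg Q0 G) (restr_to_subalg Q G) x"
proof -
  let ?d = "RN_deriv (restr_to_subalg Q0 X) (restr_to_subalg Q X)"
  let ?\<Omega> = "space Q0"
  have ac: "null_sets Q0 \<subseteq> null_sets Q" using eqn by simp
  have ac': "null_sets Q \<subseteq> null_sets Q0" using eqn by simp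
  have subG: "subalgebra Q0 G" using sG by (simp add: subalgebra_def)
  have subQX: "subalgebra Q X" using subX sp st by (simp add: subalgebra_def)
  have dX: "?d \<in> borel_measurable X" by (rule dens_meas[OF subX])
  have dQ0: "?d \<in> borel_measurable Q0" by (rule measurable_from_subalg[OF subX dX])
  interpret SQ: sigma_finite_subalgebra Q X by (rule sfs[OF Q subQX])
  interpret SQ0: sigma_finite_subalgebra Q0 X by (rule sfs[OF Q0 subX])
  interpret PQ: prob_space Q by (rule Q)
  interpret PQ0: prob_space Q0 by (rule Q0)
  have XQ0: "\<And>c. c \<in> sets X \<Longrightarrow> c \<in> sets Q0" using subX by (auto simp: subalgebra_def)
  have RQ0: "\<And>c. c \<in> sets R \<Longrightarrow> c \<in> sets Q0" using subR by (auto simp: subalgebra_def)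
  have fin: "AE x in Q0. 0 < ?d x \<and> ?d x < \<infinity>" by (rule dens_pos_fin[OF Q Q0 sp st eqn subX])
  have dint: "integrable Q0 (\<lambda>x. enn2real (?d x))" by (rule dens_integrable[OF Q Q0 sp st ac subX])
  define E where "E = {a \<inter> c | a c. a \<in> sets R \<and> c \<in> sets X}"
  have key: "emeasure Q (a \<inter> c) = emeasure (density Q0 ?d) (a \<inter> c)" if a: "a \<in> sets R" and c: "c \<in> sets X" for a c
  proof -
    have aQ: "a \<in> sets Q" "c \<in> sets Q" using a c XQ0 RQ0 st by auto
    let ?cQ = "real_cond_exp Q X (indicator a)"
    let ?c0 = "real_cond_exp Q0 X (indicator a)"
    have icX: "(indicator c :: 'a \<Rightarrow> real) \<in> borel_measurable X" using c by simp
    have "measure Q (a \<inter> c) = (\<integral>x. indicator c x * indicator a x \<partial>Q)"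
      using aQ by (simp add: indicator_inter_arith[symmetric] Int_commute)
    also have "\<dots> = (\<integral>x. indicator c x * ?cQ x \<partial>Q)"
      by (rule SQ.real_cond_exp_intg(2)[symmetric])
         (use aQ in \<open>simp_all add: indicator_inter_arith[symmetric] icX less_top[symmetric] PQ.emeasure_finite\<close>)
    also have "\<dots> = (\<integral>x. indicator c x * ?c0 x \<partial>Q)"
    proof (rule integral_cong_AE)
      show "(\<lambda>x. indicator c x * ?cQ x) \<in> borel_measurable Q" using aQ by measurable
      show "(\<lambda>x. indicator c x * ?c0 x) \<in> borel_measurable Q"
        using aQ measurable_from_subalg[OF subQX borel_measurable_cond_exp[of Q0 X "indicator a"]] by measurable
      show "AE x in Q. indicator c x * ?cQ x = indicator c x * ?c0 x"
        using AE_transfer[OF ac sp ni[OF a]] by eventually_elim simp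
    qed
    also have "\<dots> = (\<integral>x. enn2real (?d x) * (indicator c x * ?c0 x) \<partial>Q0)"
      by (rule real_change[OF Q Q0 sp st ac subX]) (use icX in measurable)
    also have "\<dots> = (\<integral>x. (enn2real (?d x) * indicator c x) * ?c0 x \<partial>Q0)"
      by (simp add: mult_ac)
    also have "\<dots> = (\<integral>x. (enn2real (?d x) * indicator c x) * indicator a x \<partial>Q0)"
    proof (rule SQ0.real_cond_exp_intg(2))
      show "integrable Q0 (\<lambda>x. enn2real (?d x) * indicator c x * indicator a x)"
        using XQ0[OF c] RQ0[OF a] dint by (intro integrable_real_mult_indicator) auto
      show "(\<lambda>x. enn2real (?d x) * indicator c x) \<in> borel_measurable X" using dX icX by measurable
      show "indicator a \<in> borel_measurable Q0" using RQ0[OF a] by simp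
    qed
    also have "\<dots> = (\<integral>x. enn2real (?d x) * indicator (a \<inter> c) x \<partial>Q0)"
      by (rule Bochner_Integration.integral_cong) (auto simp: indicator_def)
    finally have m: "measure Q (a \<inter> c) = (\<integral>x. enn2real (?d x) * indicator (a \<inter> c) x \<partial>Q0)" .
    have acQ0: "a \<inter> c \<in> sets Q0" using XQ0[OF c] RQ0[OF a] by auto
    have "emeasure (density Q0 ?d) (a \<inter> c) = (\<integral>\<^sup>+x. ?d x * indicator (a \<inter> c) x \<partial>Q0)"
      by (rule emeasure_density[OF dQ0 acQ0])
    also have "\<dots> = (\<integral>\<^sup>+x. ennreal (enn2real (?d x) * indicator (a \<inter> c) x) \<partial>Q0)"
      by (rule nn_integral_cong_AE) (use fin in \<open>eventually_elim, auto simp: indicator_def ennreal_enn2real_if\<close>)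
    also have "\<dots> = ennreal (\<integral>x. enn2real (?d x) * indicator (a \<inter> c) x \<partial>Q0)"
      by (rule nn_integral_eq_integral) (use acQ0 dint integrable_real_mult_indicator in auto)
    also have "\<dots> = emeasure Q (a \<inter> c)"
      unfolding m[symmetric] using acQ0 st by (simp add: PQ.emeasure_eq_measure)
    finally show ?thesis by simp
  qed
  have QN: "Q = density Q0 ?d"
  proof (rule measure_eqI_generator_eq[where E=E and \<Omega>="?\<Omega>" and A="\<lambda>_. ?\<Omega>"])
    show "Int_stable E"
      unfolding Int_stable_def E_def
    proof (safe)
      fix a c a' c' assume "a \<in> sets R" "c \<in> sets X" "a' \<in> sets R" "c' \<in> sets X"
      then show "\<exists>a'' c''. a \<inter> c \<inter> (a' \<inter> c') = a'' \<inter> c'' \<and> a'' \<in> sets R \<and> c'' \<in> sets X"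
        by (intro exI[of _ "a \<inter> a'"] exI[of _ "c \<inter> c'"]) auto
    qed
    show "E \<subseteq> Pow ?\<Omega>" unfolding E_def using XQ0 sets.sets_into_space by fastforce
    show "\<And>Y. Y \<in> E \<Longrightarrow> emeasure Q Y = emeasure (density Q0 ?d) Y"
      unfolding E_def using key by blast
    have sE: "sets Q0 = sigma_sets ?\<Omega> E"
      unfolding gen
    proof (rule sigma_sets_eqI)
      fix b assume "b \<in> sets X \<union> sets R"
      then show "b \<in> sigma_sets ?\<Omega> E"
      proof
        assume b: "b \<in> sets X"
        have "?\<Omega> \<in> sets R" using subR by (metis sets.top subalgebra_def)
        then have "?\<Omega> \<inter> b \<in> E" unfolding E_def using b by blast
        moreover have "?\<Omega> \<inter> b = b" using XQ0[OF b] sets.sets_into_space by blast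
        ultimately show ?thesis by auto
      next
        assume b: "b \<in> sets R"
        have "?\<Omega> \<in> sets X" using subX by (metis sets.top subalgebra_def)
        then have "b \<inter> ?\<Omega> \<in> E" unfolding E_def using b by blast
        moreover have "b \<inter> ?\<Omega> = b" using RQ0[OF b] sets.sets_into_space by blast
        ultimately show ?thesis by auto
      qed
    next
      fix e assume "e \<in> E"
      then have "e \<in> sets Q0" unfolding E_def using XQ0 RQ0 by blast
      then show "e \<in> sigma_sets ?\<Omega> (sets X \<union> sets R)" using gen by simp
    qed
    show "sets Q = sigma_sets ?\<Omega> E" using st sE by simp
    show "sets (density Q0 ?d) = sigma_sets ?\<Omega> E" using sE by simp
    show "range (\<lambda>_. ?\<Omega>) \<subseteq> E"
    proof -
      have "?\<Omega> \<in> sets X" "?\<Omega> \<in> sets R" using subX subR by (metis sets.top subalgebra_def)+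
      then have "?\<Omega> \<inter> ?\<Omega> \<in> E" unfolding E_def by blast
      then show ?thesis by auto
    qed
    show "(\<Union>i. ?\<Omega>) = ?\<Omega>" by simp
    show "\<And>i. emeasure Q ?\<Omega> \<noteq> \<infinity>" by (simp add: PQ.emeasure_finite)
  qed
  have dG: "?d \<in> borel_measurable G" using dX subX sG
    by (intro measurable_from_subalg[of G X]) (auto simp: subalgebra_def)
  have "AE x in Q0. ?d x = RN_deriv (restr_to_subalg Q0 G) (restr_to_subalg Q G) x"
  proof (rule dens_unique[OF Q Q0 sp st subG dG])
    fix A assume "A \<in> sets G"
    then have A: "A \<in> sets Q0" using sG by simp
    have "emeasure Q A = emeasure (density Q0 ?d) A" using QN by simp
    also have "\<dots> = (\<integral>\<^sup>+x. ?d x * indicator A x \<partial>Q0)" by (rule emeasure_density[OF dQ0 A])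
    finally show "emeasure Q A = (\<integral>\<^sup>+x. ?d x * indicator A x \<partial>Q0)" .
  qed
  then show ?thesis .
qed


lemma sets_gen_sigma: "sets (gen_sigma \<Omega> f I) = sigma_sets \<Omega> {f i -` B \<inter> \<Omega> | i B. i \<in> I \<and> B \<in> sets borel}"
  unfolding gen_sigma_def by (rule sets_measure_of) auto

lemma space_gen_sigma: "space (gen_sigma \<Omega> f I) = \<Omega>"
  unfolding gen_sigma_def by (rule space_measure_of) auto

lemma sets_join_sigma: "sets G \<subseteq> Pow \<Omega> \<Longrightarrow> sets H \<subseteq> Pow \<Omega> \<Longrightarrow>
    sets (join_sigma \<Omega> G H) = sigma_sets \<Omega> (sets G \<union> sets H)"
  unfolding join_sigma_def by (rule sets_measure_of) auto

lemma space_join_sigma: "sets G \<subseteq> Pow \<Omega> \<Longrightarrow> sets H \<subseteq> Pow \<Omega> \<Longrightarrow> space (join_sigma \<Omega> G H) = \<Omega>"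
  unfolding join_sigma_def by (rule space_measure_of) auto

lemma gen_sigma_Pow: "sets (gen_sigma \<Omega> f I) \<subseteq> Pow \<Omega>"
  using sets.sets_into_space[of _ "gen_sigma \<Omega> f I"] by (auto simp: space_gen_sigma)

lemma gen_sigma_meas:
  fixes f :: "'i \<Rightarrow> 'a \<Rightarrow> 'b::topological_space"
  shows "i \<in> I \<Longrightarrow> f i \<in> borel_measurable (gen_sigma \<Omega> f I)"
proof (rule measurableI)
  fix B :: "'b set" assume "i \<in> I" "B \<in> sets borel"
  then show "f i -` B \<inter> space (gen_sigma \<Omega> f I) \<in> sets (gen_sigma \<Omega> f I)"
    unfolding sets_gen_sigma space_gen_sigma by (intro sigma_sets.Basic) blast
qed auto

lemma gen_sigma_subset:
  assumes "space M = \<Omega>" "\<And>i. i \<in> I \<Longrightarrow> f i \<in> borel_measurable M"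
  shows "sets (gen_sigma \<Omega> f I) \<subseteq> sets M"
  unfolding sets_gen_sigma using assms
  by (intro sets.sigma_sets_subset[of _ M, simplified assms(1)]) (auto intro: measurable_sets)

lemma join_subset:
  assumes "space M = \<Omega>" "sets G \<subseteq> sets M" "sets H \<subseteq> sets M"
  shows "sets (join_sigma \<Omega> G H) \<subseteq> sets M"
proof -
  have P: "sets G \<subseteq> Pow \<Omega>" "sets H \<subseteq> Pow \<Omega>" using assms sets.sets_into_space by blast+
  show ?thesis unfolding sets_join_sigma[OF P]
    using assms by (intro sets.sigma_sets_subset[of _ M, simplified assms(1)]) auto
qed

lemma trace_sigma:
  assumes sp: "space M = \<Omega>" and gen: "\<And>s. s \<in> S \<Longrightarrow> \<exists>h\<in>sets M. s \<inter> E = h \<inter> E"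
    and A: "A \<in> sigma_sets \<Omega> S"
  shows "\<exists>h\<in>sets M. A \<inter> E = h \<inter> E"
  using A
proof induction
  case (Basic a) then show ?case by (rule gen)
next
  case Empty then show ?case by (intro bexI[of _ "{}"]) auto
next
  case (Compl a)
  then obtain h where h: "h \<in> sets M" "a \<inter> E = h \<inter> E" by blast
  have "(\<Omega> - a) \<inter> E = (\<Omega> - h) \<inter> E" using h(2) by blast
  moreover have "\<Omega> - h \<in> sets M" using h(1) sp by (metis sets.compl_sets)
  ultimately show ?case by blast
next
  case (Union a)
  then have "\<forall>i. \<exists>h\<in>sets M. a i \<inter> E = h \<inter> E" by blast
  then obtain h where h: "\<And>i. h i \<in> sets M" "\<And>i. a i \<inter> E = h i \<inter> E" by metis
  have "(\<Union>i. a i) \<inter> E = (\<Union>i. h i) \<inter> E" using h(2) by blast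
  moreover have "(\<Union>i. h i) \<in> sets M" using h(1) by auto
  ultimately show ?case by blast
qed

lemma path_event_meas:
  assumes Rc: "\<And>\<omega>. \<omega> \<in> \<Omega> \<Longrightarrow> cadlag (\<lambda>t. R t \<omega>)"
    and w0: "\<omega>0 \<in> path_event \<Omega> R r"
  shows "path_event \<Omega> R r \<in> sets (gen_sigma \<Omega> R {0..})"
proof -
  let ?I = "\<rat> \<inter> {(0::real)..}"
  have eq: "path_event \<Omega> R r = (\<Inter>q\<in>?I. R q -` {r q} \<inter> \<Omega>)"
  proof
    show "path_event \<Omega> R r \<subseteq> (\<Inter>q\<in>?I. R q -` {r q} \<inter> \<Omega>)"
      unfolding path_event_def by auto
    show "(\<Inter>q\<in>?I. R q -` {r q} \<inter> \<Omega>) \<subseteq> path_event \<Omega> R r"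
    proof
      fix \<omega> assume w: "\<omega> \<in> (\<Inter>q\<in>?I. R q -` {r q} \<inter> \<Omega>)"
      have "(0::real) \<in> ?I" by simp
      then have w\<Omega>: "\<omega> \<in> \<Omega>" using w by blast
      have w00: "\<omega>0 \<in> \<Omega>" "\<And>t. t \<ge> 0 \<Longrightarrow> R t \<omega>0 = r t" using w0 unfolding path_event_def by auto
      have "R t \<omega> = r t" if t: "t \<ge> 0" for t
      proof -
        have "\<forall>n. \<exists>q\<in>\<rat>. t < q \<and> q < t + 1 / (real n + 1)"
          by (intro allI Rats_dense_in_real) simp
        then obtain q where q: "\<And>n. q n \<in> \<rat>" "\<And>n. t < q n" "\<And>n. q n < t + 1 / (real n + 1)"
          by metis
        have z: "(\<lambda>n. 1 / (real n + 1)) \<longlonglongrightarrow> 0"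
          using LIMSEQ_Suc[OF lim_1_over_n] by (simp add: add.commute)
        have "(\<lambda>n. t + 1 / (real n + 1)) \<longlonglongrightarrow> t + 0"
          by (intro tendsto_add tendsto_const z)
        then have ql: "q \<longlonglongrightarrow> t"
          using q(2,3) by (intro tendsto_sandwich[of "\<lambda>_. t" q sequentially "\<lambda>n. t + 1 / (real n + 1)"])
                          (auto intro!: always_eventually less_imp_le)
        have qr: "filterlim q (at_right t) sequentially"
          unfolding filterlim_at using ql q(2) by (auto intro: always_eventually)
        have c1: "((\<lambda>s. R s \<omega>) \<longlongrightarrow> R t \<omega>) (at_right t)" using Rc[OF w\<Omega>] t unfolding cadlag_def by auto
        have c2: "((\<lambda>s. R s \<omega>0) \<longlongrightarrow> R t \<omega>0) (at_right t)" using Rc[OF w00(1)] t unfolding cadlag_def by auto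
        have l1: "(\<lambda>n. R (q n) \<omega>) \<longlonglongrightarrow> R t \<omega>" by (rule filterlim_compose[OF c1 qr])
        have l2: "(\<lambda>n. R (q n) \<omega>0) \<longlonglongrightarrow> R t \<omega>0" by (rule filterlim_compose[OF c2 qr])
        have "\<And>n. R (q n) \<omega> = R (q n) \<omega>0"
        proof -
          fix n
          have "q n \<ge> 0" using q(2)[of n] t by simp
          then have "q n \<in> ?I" using q(1) by simp
          then have "R (q n) \<omega> = r (q n)" using w by blast
          also have "\<dots> = R (q n) \<omega>0" using w00(2) \<open>q n \<ge> 0\<close> by simp
          finally show "R (q n) \<omega> = R (q n) \<omega>0" .
        qed
        then have "R t \<omega> = R t \<omega>0" using l1 l2 LIMSEQ_unique by simp
        then show ?thesis using w00(2) t by simp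
      qed
      then show "\<omega> \<in> path_event \<Omega> R r" using w\<Omega> unfolding path_event_def by auto
    qed
  qed
  have "(\<Inter>q\<in>?I. R q -` {r q} \<inter> \<Omega>) \<in> sets (gen_sigma \<Omega> R {0..})"
  proof (rule sets.countable_INT')
    show "countable ?I" using countable_rat by auto
    have "(0::real) \<in> ?I" by simp
    then show "?I \<noteq> {}" by (metis equals0D)
    show "(\<lambda>q. R q -` {r q} \<inter> \<Omega>) ` ?I \<subseteq> sets (gen_sigma \<Omega> R {0..})"
    proof (rule image_subsetI)
      fix q assume q: "q \<in> ?I"
      have "R q -` {r q} \<inter> \<Omega> \<in> {R i -` B \<inter> \<Omega> | i B. i \<in> {0..} \<and> B \<in> sets borel}"
        using q by (intro CollectI exI[of _ q] exI[of _ "{r q}"]) auto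
      then show "R q -` {r q} \<inter> \<Omega> \<in> sets (gen_sigma \<Omega> R {0..})"
        unfolding sets_gen_sigma by (rule sigma_sets.Basic)
    qed
  qed
  then show ?thesis unfolding eq .
qed


lemma alg_enn:
  fixes aF aX aXr aXrR bF bX bXr bXrR cF cX cXr cXrR :: ennreal
  assumes pos: "0 < aF" "aF < \<infinity>" "0 < aX" "aX < \<infinity>" "0 < aXr" "aXr < \<infinity>" "0 < aXrR" "aXrR < \<infinity>"
     "0 < bF" "bF < \<infinity>" "0 < bX" "bX < \<infinity>" "0 < bXr" "bXr < \<infinity>" "0 < bXrR" "bXrR < \<infinity>"
    and ch: "cF = aF * bF" "cX = aX * bX" "cXr = aXr * bXr" "cXrR = aXrR * bXrR"
    and ni: "aX = aF"
    and car1: "enn2real cF / enn2real cX = enn2real cXrR / enn2real cXr"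
    and car2: "enn2real bF / enn2real bX = enn2real bXrR / enn2real bXr"
  shows "aXrR = aXr"
proof -
  have r: "0 < enn2real x" if "0 < x" "x < \<infinity>" for x :: ennreal
    using that by (simp add: enn2real_positive_iff)
  define AF where "AF = enn2real aF"
  define AX where "AX = enn2real aX"
  define AXr where "AXr = enn2real aXr"
  define AXrR where "AXrR = enn2real aXrR"
  define BF where "BF = enn2real bF"
  define BX where "BX = enn2real bX"
  define BXr where "BXr = enn2real bXr"
  define BXrR where "BXrR = enn2real bXrR"
  have P: "0 < AF" "0 < AX" "0 < AXr" "0 < AXrR" "0 < BF" "0 < BX" "0 < BXr" "0 < BXrR"
    unfolding AF_def AX_def AXr_def AXrR_def BF_def BX_def BXr_def BXrR_def using pos r by auto
  have e1: "(AF * BF) / (AX * BX) = (AXrR * BXrR) / (AXr * BXr)"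
    using car1 unfolding ch AF_def AX_def AXr_def AXrR_def BF_def BX_def BXr_def BXrR_def
    by (simp add: enn2real_mult)
  have e2: "BF / BX = BXrR / BXr" using car2 unfolding BF_def BX_def BXr_def BXrR_def .
  have ax: "AX = AF" unfolding AX_def AF_def ni ..
  have "(AF * BF) / (AX * BX) = BF / BX" using P ax by simp
  then have "(AXrR * BXrR) / (AXr * BXr) = BXrR / BXr" using e1 e2 by simp
  then have "AXrR = AXr" using P by (simp add: field_simps)
  then have "ennreal (enn2real aXrR) = ennreal (enn2real aXr)" unfolding AXrR_def AXr_def by simp
  then show ?thesis using pos(6,8) by (simp add: ennreal_enn2real_if split: if_splits)
qed

theorem theorem4:
  fixes \<Omega> :: "'a set"
    and X :: "real \<Rightarrow> 'a \<Rightarrow> 'e::euclidean_space"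
    and R :: "real \<Rightarrow> 'a \<Rightarrow> real"
    and P :: "'th \<Rightarrow> 'ps \<Rightarrow> 'a measure"
    and \<theta>0 :: 'th and \<psi>0 :: 'ps
    and r :: "real \<Rightarrow> real"
  defines "\<X> \<equiv> gen_sigma \<Omega> X {0..}"
    and "\<R> \<equiv> gen_sigma \<Omega> R {0..}"
    and "\<O> \<equiv> join_sigma \<Omega> (gen_sigma \<Omega> (\<lambda>t \<omega>. R t \<omega> *\<^sub>R X t \<omega>) {0..}) (gen_sigma \<Omega> R {0..})"
    and "\<X>r \<equiv> gen_sigma \<Omega> (\<lambda>t \<omega>. r t *\<^sub>R X t \<omega>) {0..}"
  assumes R_01: "\<And>t \<omega>. t \<ge> 0 \<Longrightarrow> \<omega> \<in> \<Omega> \<Longrightarrow> R t \<omega> \<in> {0, 1}"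
    and X_cadlag: "\<And>\<omega>. \<omega> \<in> \<Omega> \<Longrightarrow> cadlag (\<lambda>t. X t \<omega>)"
    and R_cadlag: "\<And>\<omega>. \<omega> \<in> \<Omega> \<Longrightarrow> cadlag (\<lambda>t. R t \<omega>)"
    and prob: "\<And>\<theta> \<psi>. prob_space (P \<theta> \<psi>)"
    and space_P: "\<And>\<theta> \<psi>. space (P \<theta> \<psi>) = \<Omega>"
    and sets_P: "\<And>\<theta> \<psi>. sets (P \<theta> \<psi>) = sets (join_sigma \<Omega> \<X> \<R>)"
    and equiv: "\<And>\<theta> \<psi> \<theta>' \<psi>'. null_sets (P \<theta> \<psi>) = null_sets (P \<theta>' \<psi>')"
    and X_law: "\<And>\<theta> \<psi> \<psi>' A. A \<in> sets \<X> \<Longrightarrow> emeasure (P \<theta> \<psi>) A = emeasure (P \<theta> \<psi>') A"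
    and noninf: "\<And>\<theta>1 \<theta>2 \<psi> A. A \<in> sets \<R> \<Longrightarrow>
        AE \<omega> in P \<theta>0 \<psi>0. real_cond_exp (P \<theta>1 \<psi>) \<X> (indicator A) \<omega>
                         = real_cond_exp (P \<theta>2 \<psi>) \<X> (indicator A) \<omega>"
    and r_pos: "measure (P \<theta>0 \<psi>0) (path_event \<Omega> R r) > 0"
    and CAR: "\<And>\<theta> \<psi>. AE \<omega> in P \<theta>0 \<psi>0. \<omega> \<in> path_event \<Omega> R r \<longrightarrow>
        condLR \<Omega> (P \<theta> \<psi>) (P \<theta>0 \<psi>0) \<R> \<X> \<omega> = condLR \<Omega> (P \<theta> \<psi>) (P \<theta>0 \<psi>0) \<R> \<X>r \<omega>"
  shows "\<forall>\<theta> \<psi>'. AE \<omega> in P \<theta>0 \<psi>'. \<omega> \<in> path_event \<Omega> R r \<longrightarrow>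
        LR (P \<theta> \<psi>') (P \<theta>0 \<psi>') \<O> \<omega> = LR (P \<theta> \<psi>') (P \<theta>0 \<psi>') \<X>r \<omega>"
proof (intro allI)
  fix \<theta> \<psi>'
  let ?Qt = "P \<theta> \<psi>'" and ?Qz = "P \<theta>0 \<psi>'" and ?P = "P \<theta>0 \<psi>0"
  define F where "F = join_sigma \<Omega> \<X> \<R>"
  define XrR where "XrR = join_sigma \<Omega> \<X>r \<R>"
  define O1 where "O1 = gen_sigma \<Omega> (\<lambda>t \<omega>. R t \<omega> *\<^sub>R X t \<omega>) {0..}"
  define E where "E = path_event \<Omega> R r"
  have spG: "space \<X> = \<Omega>" "space \<R> = \<Omega>" "space \<X>r = \<Omega>" "space O1 = \<Omega>"
    unfolding \<X>_def \<R>_def \<X>r_def O1_def by (simp_all add: space_gen_sigma)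
  have PowG: "sets \<X> \<subseteq> Pow \<Omega>" "sets \<R> \<subseteq> Pow \<Omega>" "sets \<X>r \<subseteq> Pow \<Omega>" "sets O1 \<subseteq> Pow \<Omega>"
    unfolding \<X>_def \<R>_def \<X>r_def O1_def by (simp_all add: gen_sigma_Pow)
  have sets_F: "sets F = sigma_sets \<Omega> (sets \<X> \<union> sets \<R>)"
    unfolding F_def by (rule sets_join_sigma[OF PowG(1,2)])
  have sets_XrR: "sets XrR = sigma_sets \<Omega> (sets \<X>r \<union> sets \<R>)"
    unfolding XrR_def by (rule sets_join_sigma[OF PowG(3,2)])
  have sets_O: "sets \<O> = sigma_sets \<Omega> (sets O1 \<union> sets \<R>)"
    unfolding \<O>_def O1_def[symmetric] \<R>_def[symmetric] by (rule sets_join_sigma[OF PowG(4,2)])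
  have spF: "space F = \<Omega>" "space XrR = \<Omega>"
    unfolding F_def XrR_def by (simp_all add: space_join_sigma PowG)
  have spO: "space \<O> = \<Omega>"
    unfolding \<O>_def O1_def[symmetric] \<R>_def[symmetric] by (simp add: space_join_sigma PowG)
  have setsP: "\<And>a b. sets (P a b) = sets F" using sets_P F_def by simp
  have XF: "sets \<X> \<subseteq> sets F" "sets \<R> \<subseteq> sets F" unfolding sets_F by auto
  have subXF: "subalgebra F \<X>" "subalgebra F \<R>" using XF spG spF by (auto simp: subalgebra_def)
  have Xm: "X t \<in> borel_measurable F" if "t \<ge> 0" for t
    using measurable_from_subalg[OF subXF(1)] gen_sigma_meas[of t "{0..}" X \<Omega>] that \<X>_def by simp
  have Rm: "R t \<in> borel_measurable F" if "t \<ge> 0" for t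
    using measurable_from_subalg[OF subXF(2)] gen_sigma_meas[of t "{0..}" R \<Omega>] that \<R>_def by simp
  have XrF: "sets \<X>r \<subseteq> sets F" unfolding \<X>r_def
    by (rule gen_sigma_subset[OF spF(1)]) (use Xm in simp)
  have O1F: "sets O1 \<subseteq> sets F" unfolding O1_def
    by (rule gen_sigma_subset[OF spF(1)]) (use Xm Rm in simp)
  have OF: "sets \<O> \<subseteq> sets F" unfolding sets_O
    using XF O1F spF by (intro sets.sigma_sets_subset[of _ F, simplified spF(1)]) auto
  have XrRF: "sets XrR \<subseteq> sets F" unfolding XrR_def by (rule join_subset[OF spF(1) XrF XF(2)])
  have sub: "subalgebra (P a b) G" if "G \<in> {F, \<X>, \<R>, \<X>r, XrR, \<O>}" for a b G
    using that space_P setsP spF spG spO XF XrF XrRF OF by (auto simp: subalgebra_def)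
  have sp: "\<And>a b. space (P a b) = \<Omega>" by (rule space_P)
  have nulls: "\<And>a b. null_sets (P a b) = null_sets ?P" using equiv by blast
  have E0: "E \<noteq> {}"
  proof
    assume "E = {}"
    then show False using r_pos E_def by simp
  qed
  then obtain \<omega>0 where w0: "\<omega>0 \<in> E" by blast
  have ER: "E \<in> sets \<R>" unfolding E_def \<R>_def
    by (rule path_event_meas[OF R_cadlag]) (use w0 E_def in auto)
  have EO: "E \<in> sets \<O>" unfolding sets_O using ER by auto
  have EXrR: "E \<in> sets XrR" unfolding sets_XrR using ER by auto
  have onE: "R t \<omega> = r t" if "\<omega> \<in> E" "t \<ge> 0" for \<omega> t
    using that unfolding E_def path_event_def by auto
  have T1: "\<exists>B\<in>sets XrR. A \<inter> E = B \<inter> E" if A: "A \<in> sets \<O>" for A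
  proof (rule trace_sigma[OF spF(2) _ A[unfolded sets_O]])
    fix s assume "s \<in> sets O1 \<union> sets \<R>"
    then show "\<exists>h\<in>sets XrR. s \<inter> E = h \<inter> E"
    proof
      assume sO1: "s \<in> sets O1"
      show ?thesis
      proof (rule trace_sigma[OF spF(2) _ sO1[unfolded O1_def sets_gen_sigma]])
        fix s' assume "s' \<in> {(\<lambda>t \<omega>. R t \<omega> *\<^sub>R X t \<omega>) i -` B \<inter> \<Omega> |i B. i \<in> {0..} \<and> B \<in> sets borel}"
        then obtain i B where iB: "s' = (\<lambda>\<omega>. R i \<omega> *\<^sub>R X i \<omega>) -` B \<inter> \<Omega>" "i \<ge> 0" "B \<in> sets borel" by auto
        let ?h = "(\<lambda>\<omega>. r i *\<^sub>R X i \<omega>) -` B \<inter> \<Omega>"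
        have "?h \<in> sets \<X>r" unfolding \<X>r_def sets_gen_sigma using iB by (intro sigma_sets.Basic) auto
        then have "?h \<in> sets XrR" unfolding sets_XrR by auto
        moreover have "s' \<inter> E = ?h \<inter> E" using iB onE by auto
        ultimately show "\<exists>h\<in>sets XrR. s' \<inter> E = h \<inter> E" by blast
      qed
    next
      assume "s \<in> sets \<R>"
      then have "s \<in> sets XrR" unfolding sets_XrR by auto
      then show ?thesis by blast
    qed
  qed
  have T2: "\<exists>A\<in>sets \<O>. B \<inter> E = A \<inter> E" if B: "B \<in> sets XrR" for B
  proof (rule trace_sigma[OF spO _ B[unfolded sets_XrR]])
    fix s assume "s \<in> sets \<X>r \<union> sets \<R>"
    then show "\<exists>h\<in>sets \<O>. s \<inter> E = h \<inter> E"
    proof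
      assume sXr: "s \<in> sets \<X>r"
      show ?thesis
      proof (rule trace_sigma[OF spO _ sXr[unfolded \<X>r_def sets_gen_sigma]])
        fix s' assume "s' \<in> {(\<lambda>t \<omega>. r t *\<^sub>R X t \<omega>) i -` B \<inter> \<Omega> |i B. i \<in> {0..} \<and> B \<in> sets borel}"
        then obtain i B where iB: "s' = (\<lambda>\<omega>. r i *\<^sub>R X i \<omega>) -` B \<inter> \<Omega>" "i \<ge> 0" "B \<in> sets borel" by auto
        let ?h = "(\<lambda>\<omega>. R i \<omega> *\<^sub>R X i \<omega>) -` B \<inter> \<Omega>"
        have "?h \<in> sets O1" unfolding O1_def sets_gen_sigma using iB by (intro sigma_sets.Basic) auto
        then have "?h \<in> sets \<O>" unfolding sets_O by auto
        moreover have "s' \<inter> E = ?h \<inter> E" using iB onE by auto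
        ultimately show "\<exists>h\<in>sets \<O>. s' \<inter> E = h \<inter> E" by blast
      qed
    next
      assume "s \<in> sets \<R>"
      then have "s \<in> sets \<O>" unfolding sets_O by auto
      then show ?thesis by blast
    qed
  qed
  have prQ: "prob_space ?Qt" "prob_space ?Qz" "prob_space ?P" by (rule prob)+
  have trace: "AE x in ?Qz. x \<in> E \<longrightarrow> RN_deriv (restr_to_subalg ?Qz \<O>) (restr_to_subalg ?Qt \<O>) x =
                                 RN_deriv (restr_to_subalg ?Qz XrR) (restr_to_subalg ?Qt XrR) x"
    by (rule dens_trace[OF prQ(1,2) _ _ _ sub sub EO EXrR T1 T2]) (simp_all add: sp setsP nulls[of \<theta> \<psi>'] nulls[of \<theta>0 \<psi>'])

  have subs: "\<And>a b. subalgebra (P a b) F" "\<And>a b. subalgebra (P a b) \<X>" "\<And>a b. subalgebra (P a b) \<R>"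
     "\<And>a b. subalgebra (P a b) \<X>r" "\<And>a b. subalgebra (P a b) XrR"
    using sub by simp_all
  have spQ: "space ?Qt = space ?P" "space ?Qz = space ?P" "space ?Qt = space ?Qz" by (simp_all add: sp)
  have stQ: "sets ?Qt = sets ?P" "sets ?Qz = sets ?P" "sets ?Qt = sets ?Qz" by (simp_all add: setsP)
  have nlQ: "null_sets ?Qt = null_sets ?P" "null_sets ?Qz = null_sets ?P" "null_sets ?Qt = null_sets ?Qz"
    by (simp_all only: nulls[of \<theta> \<psi>'] nulls[of \<theta>0 \<psi>'])
  have acP: "null_sets ?P \<subseteq> null_sets ?Qz" using nlQ by simp
  have acQ0: "null_sets ?Qz \<subseteq> null_sets ?P" using nlQ by simp
  have ni0: "AE x in ?Qz. (RN_deriv (restr_to_subalg ?Qz \<X>) (restr_to_subalg ?Qt \<X>)) x = (RN_deriv (restr_to_subalg ?Qz F) (restr_to_subalg ?Qt F)) x"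
  proof (rule noninf_dens[OF prQ(1,2) spQ(3) stQ(3) nlQ(3) subs(2) subs(3)])
    show "sets F = sets ?Qz" "space F = space ?Qz" using setsP spF sp by simp_all
    show "sets ?Qz = sigma_sets (space ?Qz) (sets \<X> \<union> sets \<R>)" using setsP sets_F sp by simp
    fix A assume A: "A \<in> sets \<R>"
    show "AE x in ?Qz. real_cond_exp ?Qt \<X> (indicator A) x = real_cond_exp ?Qz \<X> (indicator A) x"
    proof (rule AE_transfer[OF acP spQ(2)])
      show "AE x in ?P. real_cond_exp ?Qt \<X> (indicator A) x = real_cond_exp ?Qz \<X> (indicator A) x"
        using noninf[OF A] by blast
    qed
  qed
  have ni: "AE x in ?P. (RN_deriv (restr_to_subalg ?Qz \<X>) (restr_to_subalg ?Qt \<X>)) x = (RN_deriv (restr_to_subalg ?Qz F) (restr_to_subalg ?Qt F)) x" by (rule AE_transfer[OF acQ0 spQ(2)[symmetric] ni0])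
  have chF: "AE x in ?P. RN_deriv (restr_to_subalg ?P F) (restr_to_subalg ?Qt F) x = RN_deriv (restr_to_subalg ?Qz F) (restr_to_subalg ?Qt F) x * RN_deriv (restr_to_subalg ?P F) (restr_to_subalg ?Qz F) x"
    by (rule dens_chain[OF prQ spQ(1,2) stQ(1,2) nlQ(1,2) subs(1)])
  have paF0: "AE x in ?Qz. 0 < RN_deriv (restr_to_subalg ?Qz F) (restr_to_subalg ?Qt F) x \<and> RN_deriv (restr_to_subalg ?Qz F) (restr_to_subalg ?Qt F) x < \<infinity>"
    by (rule dens_pos_fin[OF prQ(1,2) spQ(3) stQ(3) nlQ(3) subs(1)])
  have paF: "AE x in ?P. 0 < RN_deriv (restr_to_subalg ?Qz F) (restr_to_subalg ?Qt F) x \<and> RN_deriv (restr_to_subalg ?Qz F) (restr_to_subalg ?Qt F) x < \<infinity>"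
    by (rule AE_transfer[OF acQ0 spQ(2)[symmetric] paF0])
  have pbF: "AE x in ?P. 0 < RN_deriv (restr_to_subalg ?P F) (restr_to_subalg ?Qz F) x \<and> RN_deriv (restr_to_subalg ?P F) (restr_to_subalg ?Qz F) x < \<infinity>"
    by (rule dens_pos_fin[OF prQ(2,3) spQ(2) stQ(2) nlQ(2) subs(1)])
  have chX: "AE x in ?P. RN_deriv (restr_to_subalg ?P \<X>) (restr_to_subalg ?Qt \<X>) x = RN_deriv (restr_to_subalg ?Qz \<X>) (restr_to_subalg ?Qt \<X>) x * RN_deriv (restr_to_subalg ?P \<X>) (restr_to_subalg ?Qz \<X>) x"
    by (rule dens_chain[OF prQ spQ(1,2) stQ(1,2) nlQ(1,2) subs(2)])
  have paX0: "AE x in ?Qz. 0 < RN_deriv (restr_to_subalg ?Qz \<X>) (restr_to_subalg ?Qt \<X>) x \<and> RN_deriv (restr_to_subalg ?Qz \<X>) (restr_to_subalg ?Qt \<X>) x < \<infinity>"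
    by (rule dens_pos_fin[OF prQ(1,2) spQ(3) stQ(3) nlQ(3) subs(2)])
  have paX: "AE x in ?P. 0 < RN_deriv (restr_to_subalg ?Qz \<X>) (restr_to_subalg ?Qt \<X>) x \<and> RN_deriv (restr_to_subalg ?Qz \<X>) (restr_to_subalg ?Qt \<X>) x < \<infinity>"
    by (rule AE_transfer[OF acQ0 spQ(2)[symmetric] paX0])
  have pbX: "AE x in ?P. 0 < RN_deriv (restr_to_subalg ?P \<X>) (restr_to_subalg ?Qz \<X>) x \<and> RN_deriv (restr_to_subalg ?P \<X>) (restr_to_subalg ?Qz \<X>) x < \<infinity>"
    by (rule dens_pos_fin[OF prQ(2,3) spQ(2) stQ(2) nlQ(2) subs(2)])
  have chXr: "AE x in ?P. RN_deriv (restr_to_subalg ?P \<X>r) (restr_to_subalg ?Qt \<X>r) x = RN_deriv (restr_to_subalg ?Qz \<X>r) (restr_to_subalg ?Qt \<X>r) x * RN_deriv (restr_to_subalg ?P \<X>r) (restr_to_subalg ?Qz \<X>r) x"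
    by (rule dens_chain[OF prQ spQ(1,2) stQ(1,2) nlQ(1,2) subs(4)])
  have paXr0: "AE x in ?Qz. 0 < RN_deriv (restr_to_subalg ?Qz \<X>r) (restr_to_subalg ?Qt \<X>r) x \<and> RN_deriv (restr_to_subalg ?Qz \<X>r) (restr_to_subalg ?Qt \<X>r) x < \<infinity>"
    by (rule dens_pos_fin[OF prQ(1,2) spQ(3) stQ(3) nlQ(3) subs(4)])
  have paXr: "AE x in ?P. 0 < RN_deriv (restr_to_subalg ?Qz \<X>r) (restr_to_subalg ?Qt \<X>r) x \<and> RN_deriv (restr_to_subalg ?Qz \<X>r) (restr_to_subalg ?Qt \<X>r) x < \<infinity>"
    by (rule AE_transfer[OF acQ0 spQ(2)[symmetric] paXr0])
  have pbXr: "AE x in ?P. 0 < RN_deriv (restr_to_subalg ?P \<X>r) (restr_to_subalg ?Qz \<X>r) x \<and> RN_deriv (restr_to_subalg ?P \<X>r) (restr_to_subalg ?Qz \<X>r) x < \<infinity>"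
    by (rule dens_pos_fin[OF prQ(2,3) spQ(2) stQ(2) nlQ(2) subs(4)])
  have chXrR: "AE x in ?P. RN_deriv (restr_to_subalg ?P XrR) (restr_to_subalg ?Qt XrR) x = RN_deriv (restr_to_subalg ?Qz XrR) (restr_to_subalg ?Qt XrR) x * RN_deriv (restr_to_subalg ?P XrR) (restr_to_subalg ?Qz XrR) x"
    by (rule dens_chain[OF prQ spQ(1,2) stQ(1,2) nlQ(1,2) subs(5)])
  have paXrR0: "AE x in ?Qz. 0 < RN_deriv (restr_to_subalg ?Qz XrR) (restr_to_subalg ?Qt XrR) x \<and> RN_deriv (restr_to_subalg ?Qz XrR) (restr_to_subalg ?Qt XrR) x < \<infinity>"
    by (rule dens_pos_fin[OF prQ(1,2) spQ(3) stQ(3) nlQ(3) subs(5)])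
  have paXrR: "AE x in ?P. 0 < RN_deriv (restr_to_subalg ?Qz XrR) (restr_to_subalg ?Qt XrR) x \<and> RN_deriv (restr_to_subalg ?Qz XrR) (restr_to_subalg ?Qt XrR) x < \<infinity>"
    by (rule AE_transfer[OF acQ0 spQ(2)[symmetric] paXrR0])
  have pbXrR: "AE x in ?P. 0 < RN_deriv (restr_to_subalg ?P XrR) (restr_to_subalg ?Qz XrR) x \<and> RN_deriv (restr_to_subalg ?P XrR) (restr_to_subalg ?Qz XrR) x < \<infinity>"
    by (rule dens_pos_fin[OF prQ(2,3) spQ(2) stQ(2) nlQ(2) subs(5)])
  have car1: "AE x in ?P. x \<in> E \<longrightarrow> enn2real ((RN_deriv (restr_to_subalg ?P F) (restr_to_subalg ?Qt F)) x) / enn2real ((RN_deriv (restr_to_subalg ?P \<X>) (restr_to_subalg ?Qt \<X>)) x) = enn2real ((RN_deriv (restr_to_subalg ?P XrR) (restr_to_subalg ?Qt XrR)) x) / enn2real ((RN_deriv (restr_to_subalg ?P \<X>r) (restr_to_subalg ?Qt \<X>r)) x)"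
  proof -
    have "AE \<omega> in ?P. \<omega> \<in> path_event \<Omega> R r \<longrightarrow> condLR \<Omega> ?Qt ?P \<R> \<X> \<omega> = condLR \<Omega> ?Qt ?P \<R> \<X>r \<omega>"
      by (rule CAR)
    then show ?thesis unfolding condLR_def LR_def F_def[symmetric] XrR_def[symmetric] E_def[symmetric] .
  qed
  have car2: "AE x in ?P. x \<in> E \<longrightarrow> enn2real ((RN_deriv (restr_to_subalg ?P F) (restr_to_subalg ?Qz F)) x) / enn2real ((RN_deriv (restr_to_subalg ?P \<X>) (restr_to_subalg ?Qz \<X>)) x) = enn2real ((RN_deriv (restr_to_subalg ?P XrR) (restr_to_subalg ?Qz XrR)) x) / enn2real ((RN_deriv (restr_to_subalg ?P \<X>r) (restr_to_subalg ?Qz \<X>r)) x)"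
  proof -
    have "AE \<omega> in ?P. \<omega> \<in> path_event \<Omega> R r \<longrightarrow> condLR \<Omega> ?Qz ?P \<R> \<X> \<omega> = condLR \<Omega> ?Qz ?P \<R> \<X>r \<omega>"
      by (rule CAR)
    then show ?thesis unfolding condLR_def LR_def F_def[symmetric] XrR_def[symmetric] E_def[symmetric] .
  qed
  have mainP: "AE x in ?P. x \<in> E \<longrightarrow> (RN_deriv (restr_to_subalg ?Qz XrR) (restr_to_subalg ?Qt XrR)) x = (RN_deriv (restr_to_subalg ?Qz \<X>r) (restr_to_subalg ?Qt \<X>r)) x"
    using chF chX chXr chXrR paF paX paXr paXrR pbF pbX pbXr pbXrR ni car1 car2
  proof eventually_elim
    case (elim x)
    show ?case
    proof
      assume xE: "x \<in> E"
      show "(RN_deriv (restr_to_subalg ?Qz XrR) (restr_to_subalg ?Qt XrR)) x = (RN_deriv (restr_to_subalg ?Qz \<X>r) (restr_to_subalg ?Qt \<X>r)) x"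
        by (rule alg_enn[of "(RN_deriv (restr_to_subalg ?Qz F) (restr_to_subalg ?Qt F)) x" "(RN_deriv (restr_to_subalg ?Qz \<X>) (restr_to_subalg ?Qt \<X>)) x" "(RN_deriv (restr_to_subalg ?Qz \<X>r) (restr_to_subalg ?Qt \<X>r)) x" "(RN_deriv (restr_to_subalg ?Qz XrR) (restr_to_subalg ?Qt XrR)) x" "(RN_deriv (restr_to_subalg ?P F) (restr_to_subalg ?Qz F)) x" "(RN_deriv (restr_to_subalg ?P \<X>) (restr_to_subalg ?Qz \<X>)) x" "(RN_deriv (restr_to_subalg ?P \<X>r) (restr_to_subalg ?Qz \<X>r)) x" "(RN_deriv (restr_to_subalg ?P XrR) (restr_to_subalg ?Qz XrR)) x"
                            "(RN_deriv (restr_to_subalg ?P F) (restr_to_subalg ?Qt F)) x" "(RN_deriv (restr_to_subalg ?P \<X>) (restr_to_subalg ?Qt \<X>)) x" "(RN_deriv (restr_to_subalg ?P \<X>r) (restr_to_subalg ?Qt \<X>r)) x" "(RN_deriv (restr_to_subalg ?P XrR) (restr_to_subalg ?Qt XrR)) x"])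
           (use elim xE in auto)
    qed
  qed
  have mainQ0: "AE x in ?Qz. x \<in> E \<longrightarrow> (RN_deriv (restr_to_subalg ?Qz XrR) (restr_to_subalg ?Qt XrR)) x = (RN_deriv (restr_to_subalg ?Qz \<X>r) (restr_to_subalg ?Qt \<X>r)) x"
    by (rule AE_transfer[OF acP spQ(2) mainP])
  show "AE \<omega> in ?Qz. \<omega> \<in> E \<longrightarrow> LR ?Qt ?Qz \<O> \<omega> = LR ?Qt ?Qz \<X>r \<omega>"
    using trace mainQ0 unfolding LR_def by eventually_elim auto
qed

end
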